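(* For each $\lambda\in\mathbb C$ there exists a unique solution $w_\lambda$ of the boundary value problem $\ell(w)=\lambda w$ on $(a,b)$, $\lim_{x\downarrow a}w(x)=1$, $\lim_{x\downarrow a}w^{[1]}(x)=0$. Moreover, for each fixed $x\in(a,b)$, the map $\lambda\mapsto w_\lambda(x)$ is an entire function of exponential type.
   Context: Let $-\infty\le a<b\le\infty$ and let $p,r:(a,b)\to(0,\infty)$ be functions such that $p,p',r,r'$ are locally absolutely continuous on $(a,b)$. Write $\ell u=-\frac{1}{r}(p u')'$ and $u^{[1]}=p u'$. It is assumed that $\int_a^c\int_y^c \frac{dx}{p(x)}\,r(y)\,dy<\infty$ for some $c\in(a,b)$. *)

theory Defs
  imports "HOL-Analysis.Analysis"
begin

definition abs_cont_on :: "real \<Rightarrow> real \<Rightarrow> (real \<Rightarrow> real) \<Rightarrow> bool" where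
  "abs_cont_on s t f \<longleftrightarrow>
     (\<forall>\<epsilon>>0. \<exists>\<delta>>0. \<forall>(n::nat) (u::nat \<Rightarrow> real) (v::nat \<Rightarrow> real).
        (\<forall>i<n. s \<le> u i \<and> u i \<le> v i \<and> v i \<le> t) \<and>
        (\<forall>i<n. \<forall>j<n. i \<noteq> j \<longrightarrow> v i \<le> u j \<or> v j \<le> u i) \<and>
        (\<Sum>i<n. v i - u i) < \<delta>
        \<longrightarrow> (\<Sum>i<n. \<bar>f (v i) - f (u i)\<bar>) < \<epsilon>)"

definition ivl :: "ereal \<Rightarrow> ereal \<Rightarrow> real set" where
  "ivl a b = {x. a < ereal x \<and> ereal x < b}"

definition loc_abs_cont :: "ereal \<Rightarrow> ereal \<Rightarrow> (real \<Rightarrow> real) \<Rightarrow> bool" where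
  "loc_abs_cont a b f \<longleftrightarrow> (\<forall>s t. s \<in> ivl a b \<and> t \<in> ivl a b \<and> s \<le> t \<longrightarrow> abs_cont_on s t f)"

definition at_left_end :: "ereal \<Rightarrow> real filter" where
  "at_left_end a = (if a = -\<infinity> then at_bot else at_right (real_of_ereal a))"

text \<open>Quasi-derivative u^[1] = p u'.\<close>
definition qder :: "(real \<Rightarrow> real) \<Rightarrow> (real \<Rightarrow> complex) \<Rightarrow> real \<Rightarrow> complex" where
  "qder p w x = complex_of_real (p x) * vector_derivative w (at x)"

text \<open>w solves  -(1/r)(p w')' = \<lambda> w  on (a,b), i.e. (p w')' = - \<lambda> r w.
  (Classical solution; since r is continuous this is equivalent to the
  locally-absolutely-continuous/a.e. notion.)\<close>
definition is_solution :: "ereal \<Rightarrow> ereal \<Rightarrow> (real \<Rightarrow> real) \<Rightarrow> (real \<Rightarrow> real) \<Rightarrow> complex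
    \<Rightarrow> (real \<Rightarrow> complex) \<Rightarrow> bool" where
  "is_solution a b p r lam w \<longleftrightarrow>
     (\<forall>x\<in>ivl a b. w differentiable (at x) \<and>
        (qder p w has_vector_derivative (- (lam * complex_of_real (r x) * w x))) (at x))"

definition entire_exp_type :: "(complex \<Rightarrow> complex) \<Rightarrow> bool" where
  "entire_exp_type f \<longleftrightarrow> f holomorphic_on UNIV \<and>
     (\<exists>A B. \<forall>z. norm (f z) \<le> A * exp (B * norm z))"

end

theory Submission
  imports Defs
begin

lemma ivl_eq: "ivl a b = einterval a b"
  by (simp add: ivl_def einterval_def)

lemma at_left_end_eq: "a \<noteq> \<infinity> \<Longrightarrow> at_left_end a = filtermap real_of_ereal (at_right a)"
proof (cases a)
  case (real r)
  then show ?thesis by (simp add: at_left_end_def at_right_ereal filtermap_filtermap filtermap_ident o_def)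
next
  case MInf
  then show ?thesis by (simp add: at_left_end_def at_right_MInf filtermap_filtermap filtermap_ident o_def)
qed auto

lemma tendsto_at_left_end:
  "a \<noteq> \<infinity> \<Longrightarrow> (f \<longlongrightarrow> L) (at_left_end a) \<longleftrightarrow> ((f \<circ> real_of_ereal) \<longlongrightarrow> L) (at_right a)"
  by (simp add: at_left_end_eq tendsto_compose_filtermap)

locale sl =
  fixes a b :: ereal and p r :: "real \<Rightarrow> real"
  assumes ab: "a < b"
  and ppos: "\<And>x. x \<in> einterval a b \<Longrightarrow> p x > 0"
  and rpos: "\<And>x. x \<in> einterval a b \<Longrightarrow> r x > 0"
  and pc: "\<And>x. x \<in> einterval a b \<Longrightarrow> isCont p x"
  and rc: "\<And>x. x \<in> einterval a b \<Longrightarrow> isCont r x"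
begin

abbreviation "I \<equiv> einterval a b"

lemma a_ne: "a \<noteq> \<infinity>" using ab by auto

lemma ein_sub: "x \<in> I \<Longrightarrow> einterval a (ereal x) \<subseteq> I"
  by (auto simp: einterval_def) (metis less_ereal.simps(1) less_trans)

lemma Icc_sub: "s \<in> I \<Longrightarrow> t \<in> I \<Longrightarrow> {s..t} \<subseteq> I"
  by (auto simp: einterval_def) (meson ereal_less_eq(3) order_less_le_trans, meson ereal_less_eq(3) order.strict_trans1)

lemma EXT:
  fixes f :: "real \<Rightarrow> 'a::{banach, second_countable_topology}"
  assumes cont: "\<And>x. x \<in> I \<Longrightarrow> isCont f x" and c: "c \<in> I"
    and int: "set_integrable lborel (einterval a c) f" and t: "t \<in> I"
  shows "set_integrable lborel (einterval a t) f"
proof (cases "t \<le> c")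
  case True
  show ?thesis
    by (rule set_integrable_subset[OF int]) (use True in \<open>auto simp: einterval_def intro: order_less_le_trans\<close>)
next
  case False
  have "set_integrable lborel {c..t} f"
    using Icc_sub[OF c t] cont by (intro borel_integrable_atLeastAtMost' continuous_at_imp_continuous_on) auto
  then have "set_integrable lborel (einterval a c \<union> {c..t}) f"
    using int by (intro set_integrable_Un) auto
  then show ?thesis
    by (rule set_integrable_subset) (auto simp: einterval_def)
qed

lemma G1:
  fixes f :: "real \<Rightarrow> 'a::euclidean_space"
  assumes cont: "\<And>x. x \<in> I \<Longrightarrow> isCont f x"
    and int: "\<And>t. t \<in> I \<Longrightarrow> set_integrable lborel (einterval a t) f" and x: "x \<in> I"
  shows "((\<lambda>t. LBINT s=a..t. f s) has_vector_derivative f x) (at x)"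
proof -
  from x have ax: "a < ereal x" and xb: "ereal x < b" by (auto simp: einterval_def)
  obtain d where d: "a < ereal d" "ereal d < ereal x"
    using ereal_dense2[OF ax] by (metis ereal_dense2 ereal_less_eq(3) less_eq_ereal_def order_less_le)
  obtain e where e: "ereal x < ereal e" "ereal e < b"
    using ereal_dense2[OF xb] by (metis ereal_dense2 ereal_less_eq(3) less_eq_ereal_def order_less_le)
  have dI: "d \<in> I" "e \<in> I" using d e ax xb by (auto simp: einterval_def) (metis less_ereal.simps(1) less_trans)+
  have contde: "continuous_on {d..e} f"
    using Icc_sub[OF dI] cont by (intro continuous_at_imp_continuous_on) auto
  have "((\<lambda>u. LBINT y=d..u. f y) has_vector_derivative (f x)) (at x within {d..e})"
    using d e by (intro interval_integral_FTC2 contde) auto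
  then have "((\<lambda>u. LBINT y=d..u. f y) has_vector_derivative (f x)) (at x within {d<..<e})"
    by (rule has_vector_derivative_within_subset) auto
  then have "((\<lambda>u. LBINT y=d..u. f y) has_vector_derivative (f x)) (at x)"
    using d e by (subst (asm) at_within_open) auto
  then have D: "((\<lambda>u. (LBINT y=a..d. f y) + (LBINT y=d..u. f y)) has_vector_derivative (f x)) (at x)"
    by (auto intro!: derivative_eq_intros)
  show ?thesis
  proof (rule has_vector_derivative_transform_within_open[OF D, of "{d<..<e}"])
    fix y assume y: "y \<in> {d<..<e}"
    then have yI: "y \<in> I" using Icc_sub[OF dI] by auto
    have mn: "min a (min (ereal d) (ereal y)) = a" "max a (max (ereal d) (ereal y)) = ereal (max d y)"
      using d y ax yI by (auto simp: min_def max_def einterval_def)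
    have mI: "max d y \<in> I" using dI yI by (simp add: max_def)
    have le: "a \<le> ereal (max d y)" using d(1)
      by (metis less_imp_le max.cobounded1 ereal_less_eq(3) order_trans)
    have "interval_lebesgue_integrable lborel a (ereal (max d y)) f"
      unfolding interval_lebesgue_integrable_def using int[OF mI] le by simp
    then show "(LBINT y=a..d. f y) + (LBINT y=d..y. f y) = (LBINT s=a..y. f s)"
      by (intro interval_integral_sum) (simp add: mn)
  qed (use d e in auto)
qed

lemma G2:
  fixes f :: "real \<Rightarrow> 'a::{banach, second_countable_topology}"
  assumes c: "c \<in> I" and int: "set_integrable lborel (einterval a c) f"
  shows "((\<lambda>t. LBINT s=a..t. f s) \<longlongrightarrow> 0) (at_left_end a)"
  unfolding tendsto_at_left_end[OF a_ne]
proof (rule tendsto_at_right_sequentially[of a "ereal c"], goal_cases)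
  case 1 show ?case using c by (auto simp: einterval_def)
next
  case (2 S)
  note S = 2
  have fin: "S n = ereal (real_of_ereal (S n))" for n
    using S(1,2)[of n] by (cases "S n") auto
  have eq: "((\<lambda>t. LBINT s=a..t. f s) \<circ> real_of_ereal) (S n) =
     integral\<^sup>L lborel (\<lambda>s. indicator (einterval a (S n)) s *\<^sub>R f s)" for n
    using S(1)[of n] fin[of n] by (simp add: interval_lebesgue_integral_def set_lebesgue_integral_def less_imp_le)
  have "(\<lambda>n. integral\<^sup>L lborel (\<lambda>s. indicator (einterval a (S n)) s *\<^sub>R f s)) \<longlonglongrightarrow> integral\<^sup>L lborel (\<lambda>s::real. 0::'a)"
  proof (rule integral_dominated_convergence[where w="\<lambda>s. indicator (einterval a c) s *\<^sub>R norm (f s)" and s="\<lambda>n s. indicator (einterval a (S n)) s *\<^sub>R f s" and f="\<lambda>s::real. 0::'a"])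
    show "integrable lborel (\<lambda>s. indicator (einterval a c) s *\<^sub>R norm (f s))"
      using integrable_norm[OF int[unfolded set_integrable_def]] by simp
    show "(\<lambda>s. indicator (einterval a (S n)) s *\<^sub>R f s) \<in> borel_measurable lborel" for n
    proof -
      have "set_integrable lborel (einterval a (S n)) f"
        by (rule set_integrable_subset[OF int]) (use S(2)[of n] in \<open>auto simp: einterval_def\<close>, metis less_ereal.simps(1) less_trans)
      then show ?thesis by (simp add: set_integrable_def)
    qed
    show "AE s in lborel. (\<lambda>n. indicator (einterval a (S n)) s *\<^sub>R f s) \<longlonglongrightarrow> 0"
    proof (rule AE_I2)
      fix s
      show "(\<lambda>n. indicator (einterval a (S n)) s *\<^sub>R f s) \<longlonglongrightarrow> 0"
      proof (cases "a < ereal s")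
        case True
        then have "eventually (\<lambda>n. S n < ereal s) sequentially"
          using order_tendstoD(2)[OF S(4) True] by simp
        then have "eventually (\<lambda>n. indicator (einterval a (S n)) s *\<^sub>R f s = 0) sequentially"
          by eventually_elim (auto simp: einterval_def indicator_def)
        then show ?thesis by (rule tendsto_eventually)
      next
        case False
        then show ?thesis by (simp add: einterval_def)
      qed
    qed
    show "AE s in lborel. norm (indicator (einterval a (S n)) s *\<^sub>R f s) \<le> indicator (einterval a c) s *\<^sub>R norm (f s)" for n
      using S(2)[of n] by (intro AE_I2) (auto simp: einterval_def indicator_def, metis less_ereal.simps(1) less_trans)
  qed auto
  then have "(\<lambda>n. ((\<lambda>t. LBINT s=a..t. f s) \<circ> real_of_ereal) (S n)) \<longlonglongrightarrow> 0"
    by (simp only: eq) simp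
  then show ?case
    by simp
qed

lemma EV: assumes t: "t \<in> I" shows "eventually (\<lambda>s. s \<in> I \<and> s < t) (at_left_end a)"
proof -
  have at: "a < ereal t" using t by (auto simp: einterval_def)
  have "\<exists>b'>a. \<forall>y>a. y < b' \<longrightarrow> real_of_ereal y \<in> I \<and> real_of_ereal y < t"
  proof (intro exI[of _ "ereal t"] conjI allI impI)
    fix y assume y: "a < y" "y < ereal t"
    then have fin: "y = ereal (real_of_ereal y)" by (cases y) auto
    show "real_of_ereal y \<in> I" using y t fin by (auto simp: einterval_def)
    show "real_of_ereal y < t" using y fin by (metis less_ereal.simps(1))
  qed (fact at)
  then show ?thesis
    unfolding at_left_end_eq[OF a_ne] eventually_filtermap by (subst eventually_at_right[OF at])
qed

lemma ale_nonbot: "at_left_end a \<noteq> bot"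
  by (simp add: at_left_end_def)

lemma CMP0:
  fixes F :: "real \<Rightarrow> real"
  assumes mono: "\<And>s t. s \<in> I \<Longrightarrow> t \<in> I \<Longrightarrow> s \<le> t \<Longrightarrow> F s \<le> F t"
    and lim: "(F \<longlongrightarrow> 0) (at_left_end a)" and t: "t \<in> I"
  shows "0 \<le> F t"
proof (rule tendsto_le[OF ale_nonbot tendsto_const lim])
  show "\<forall>\<^sub>F x in at_left_end a. F x \<le> F t"
    using EV[OF t] by eventually_elim (use mono t in auto)
qed

lemma mono_deriv:
  fixes F :: "real \<Rightarrow> real"
  assumes d: "\<And>x. x \<in> I \<Longrightarrow> (F has_real_derivative F' x) (at x)" and nn: "\<And>x. x \<in> I \<Longrightarrow> F' x \<ge> 0"
    and s: "s \<in> I" and t: "t \<in> I" and st: "s \<le> t"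
  shows "F s \<le> F t"
proof -
  have sub: "{s..t} \<subseteq> I" by (rule Icc_sub[OF s t])
  show ?thesis
  proof (rule DERIV_nonneg_imp_increasing_open[OF st])
    fix x assume "s < x" "x < t"
    then have "x \<in> I" using sub by auto
    then show "\<exists>y. (F has_real_derivative y) (at x) \<and> 0 \<le> y" using d nn by blast
  qed (use sub d in \<open>auto intro!: continuous_at_imp_continuous_on DERIV_isCont\<close>)
qed

lemma norm_LBINT_le:
  fixes f :: "real \<Rightarrow> complex" and g :: "real \<Rightarrow> real"
  assumes fi: "set_integrable lborel (einterval a t) f" and gi: "set_integrable lborel (einterval a t) g"
    and le: "\<And>s. s \<in> einterval a t \<Longrightarrow> norm (f s) \<le> g s" and at: "a < ereal t"
  shows "norm (LBINT s=a..t. f s) \<le> (LBINT s=a..t. g s)"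
proof -
  have "norm (LBINT s=a..t. f s) = norm (LINT s:einterval a t|lborel. f s)"
    using at by (simp add: interval_lebesgue_integral_le_eq less_imp_le)
  also have "\<dots> \<le> (LINT s:einterval a t|lborel. norm (f s))"
    by (rule set_integral_norm_bound[OF fi])
  also have "\<dots> \<le> (LINT s:einterval a t|lborel. g s)"
    by (rule set_integral_mono) (use fi gi le in \<open>auto intro: set_integrable_norm\<close>)
  also have "\<dots> = (LBINT s=a..t. g s)"
    using at by (simp add: interval_lebesgue_integral_le_eq less_imp_le)
  finally show ?thesis .
qed

lemma meas_cont:
  fixes f :: "real \<Rightarrow> 'a::{banach, second_countable_topology}"
  assumes "\<And>x. x \<in> I \<Longrightarrow> isCont f x" and t: "t \<in> I"
  shows "set_borel_measurable lborel (einterval a t) f"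
proof -
  have "continuous_on (einterval a t) f"
    using assms ein_sub[OF t] by (intro continuous_at_imp_continuous_on) auto
  then have "set_borel_measurable borel (einterval a t) f"
    by (intro set_measurable_continuous_on) auto
  then show ?thesis by (simp add: set_borel_measurable_def)
qed

end
context sl begin

lemma Dpart:
  assumes c: "c \<in> I"
    and fin: "(\<integral>\<^sup>+ y. ennreal (indicator {y. a < ereal y \<and> y < c} y *
            (integral {y..c} (\<lambda>x. 1 / p x) * r y)) \<partial>lborel) < \<infinity>"
  shows "(\<exists>c\<in>I. set_integrable lborel (einterval a c) r) \<and>
         (\<exists>c\<in>I. set_integrable lborel (einterval a c) (\<lambda>t. (LBINT s=a..t. r s) / p t))"
proof -
  have ipc: "isCont (\<lambda>x. 1 / p x) x" if "x \<in> I" for x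
    using pc[OF that] ppos[OF that] by (intro continuous_intros) auto
  obtain \<Phi> :: "real \<Rightarrow> real" where \<Phi>0: "\<forall>x::real. a < x \<longrightarrow> x < b \<longrightarrow> (\<Phi> has_vector_derivative 1 / p x) (at x)"
    using einterval_antiderivative[OF ab, of "\<lambda>x. 1 / p x"] ipc by (auto simp: einterval_def)
  have \<Phi>d: "(\<Phi> has_real_derivative 1 / p x) (at x)" if "x \<in> I" for x
    using \<Phi>0 that by (auto simp: einterval_def has_real_derivative_iff_has_vector_derivative)
  have \<Phi>c: "isCont \<Phi> x" if "x \<in> I" for x by (rule DERIV_isCont[OF \<Phi>d[OF that]])
  have \<Phi>m: "\<Phi> s \<le> \<Phi> t" if "s \<in> I" "t \<in> I" "s \<le> t" for s t
    by (rule mono_deriv[OF \<Phi>d _ that]) (use ppos in \<open>auto intro: less_imp_le\<close>)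
  have Fe: "integral {y..c} (\<lambda>x. 1 / p x) = \<Phi> c - \<Phi> y" if y: "y \<in> I" "y \<le> c" for y
  proof -
    have "((\<lambda>x. 1 / p x) has_integral (\<Phi> c - \<Phi> y)) {y..c}"
    proof (rule fundamental_theorem_of_calculus[OF y(2)])
      fix x assume "x \<in> {y..c}"
      then have "x \<in> I" using Icc_sub[OF y(1) c] by auto
      then show "(\<Phi> has_vector_derivative 1 / p x) (at x within {y..c})"
        using \<Phi>d by (auto intro: has_vector_derivative_at_within simp: has_real_derivative_iff_has_vector_derivative)
    qed
    then show ?thesis by (rule integral_unique)
  qed
  define G where "G y = (\<Phi> c - \<Phi> y) * r y" for y
  have Gc: "isCont G x" if "x \<in> I" for x
    unfolding G_def using \<Phi>c[OF that] rc[OF that] by (intro continuous_intros) auto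
  have inA: "y \<in> I" "y \<le> c" if "y \<in> einterval a c" for y
    using that ein_sub[OF c] by (auto simp: einterval_def)
  have Gnn: "0 \<le> G y" if "y \<in> I" "y \<le> c" for y
    using \<Phi>m[OF that(1) c that(2)] rpos[OF that(1)] by (simp add: G_def)
  have Gint: "set_integrable lborel (einterval a c) G"
    unfolding set_integrable_def
  proof (rule integrableI_nonneg)
    show "(\<lambda>y. indicat_real (einterval a c) y *\<^sub>R G y) \<in> borel_measurable lborel"
      using meas_cont[OF Gc c] by (simp add: set_borel_measurable_def)
    show "AE y in lborel. 0 \<le> indicat_real (einterval a c) y *\<^sub>R G y"
      by (intro AE_I2) (auto simp: indicator_def intro: Gnn dest: inA)
    have "(\<integral>\<^sup>+ y. ennreal (indicat_real (einterval a c) y *\<^sub>R G y) \<partial>lborel) =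
      (\<integral>\<^sup>+ y. ennreal (indicator {y. a < ereal y \<and> y < c} y * (integral {y..c} (\<lambda>x. 1 / p x) * r y)) \<partial>lborel)"
    proof (rule nn_integral_cong)
      fix y
      show "ennreal (indicat_real (einterval a c) y *\<^sub>R G y) =
        ennreal (indicator {y. a < ereal y \<and> y < c} y * (integral {y..c} (\<lambda>x. 1 / p x) * r y))"
      proof (cases "y \<in> einterval a c")
        case True
        then show ?thesis using Fe[OF inA[OF True]] by (simp add: G_def einterval_def)
      next
        case False
        then show ?thesis by (auto simp: einterval_def indicator_def)
      qed
    qed
    with fin show "(\<integral>\<^sup>+ y. ennreal (indicat_real (einterval a c) y *\<^sub>R G y) \<partial>lborel) < \<infinity>" by simp
  qed
  have ac: "a < ereal c" using c by (simp add: einterval_def)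
  obtain c' where c': "a < ereal c'" "ereal c' < ereal c" using ereal_dense2[OF ac] by blast
  have c'c: "c' < c" using c'(2) by simp
  have c'I: "c' \<in> I" using c' c by (auto simp: einterval_def) (metis less_ereal.simps(1) less_trans)
  have Fpos: "\<Phi> c' < \<Phi> c"
  proof (rule DERIV_pos_imp_increasing[OF c'c])
    fix x assume "c' \<le> x" "x \<le> c"
    then have "x \<in> I" using Icc_sub[OF c'I c] by auto
    then show "\<exists>y. DERIV \<Phi> x :> y \<and> 0 < y" using \<Phi>d ppos by (intro exI[of _ "1 / p x"]) simp
  qed
  define k where "k = \<Phi> c - \<Phi> c'"
  have k0: "0 < k" using Fpos by (simp add: k_def)
  have rint: "set_integrable lborel (einterval a c') r"
  proof (rule set_integrable_bound[OF _ meas_cont[OF rc c'I]])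
    have "set_integrable lborel (einterval a c') G"
      by (rule set_integrable_subset[OF Gint]) (use c'c in \<open>auto simp: einterval_def\<close>)
    then show "set_integrable lborel (einterval a c') (\<lambda>y. G y / k)" by simp
    show "AE y in lborel. y \<in> einterval a c' \<longrightarrow> norm (r y) \<le> norm (G y / k)"
    proof (intro AE_I2 impI)
      fix y assume y: "y \<in> einterval a c'"
      have yI: "y \<in> I" and yc': "y \<le> c'" using y ein_sub[OF c'I] by (auto simp: einterval_def)
      have "k * r y \<le> (\<Phi> c - \<Phi> y) * r y"
        using \<Phi>m[OF yI c'I yc'] rpos[OF yI] by (intro mult_right_mono) (auto simp: k_def)
      then have "r y \<le> G y / k" using k0 by (simp add: G_def field_simps)
      moreover have "0 \<le> G y" using Gnn[OF yI] yc' c'c by simp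
      ultimately show "norm (r y) \<le> norm (G y / k)" using rpos[OF yI] k0 by simp
    qed
  qed
  have rI: "set_integrable lborel (einterval a t) r" if "t \<in> I" for t
    by (rule EXT[OF rc c'I rint that])
  define Rr where "Rr t = (LBINT s=a..ereal t. r s)" for t
  have Rd: "(Rr has_real_derivative r t) (at t)" if "t \<in> I" for t
    unfolding Rr_def[abs_def] has_real_derivative_iff_has_vector_derivative by (rule G1[OF rc rI that])
  have Rlim: "(Rr \<longlongrightarrow> 0) (at_left_end a)" unfolding Rr_def[abs_def] by (rule G2[OF c'I rint])
  have Rm: "Rr s \<le> Rr t" if "s \<in> I" "t \<in> I" "s \<le> t" for s t
    by (rule mono_deriv[OF Rd _ that]) (use rpos in \<open>auto intro: less_imp_le\<close>)
  have Rnn: "0 \<le> Rr t" if "t \<in> I" for t by (rule CMP0[OF Rm Rlim that])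
  have GI: "set_integrable lborel (einterval a t) G" if "t \<in> I" for t
    by (rule EXT[OF Gc c Gint that])
  define H where "H y = (LBINT s=a..ereal y. G s) - Rr y * (\<Phi> c - \<Phi> y)" for y
  have Hd: "(H has_real_derivative Rr y / p y) (at y)" if y: "y \<in> I" for y
  proof -
    have g1: "((\<lambda>y. LBINT s=a..ereal y. G s) has_real_derivative G y) (at y)"
      unfolding has_real_derivative_iff_has_vector_derivative by (rule G1[OF Gc GI y])
    have "(H has_real_derivative G y - (r y * (\<Phi> c - \<Phi> y) + (0 - 1 / p y) * Rr y)) (at y)"
      unfolding H_def[abs_def] by (intro DERIV_diff DERIV_mult DERIV_const g1 Rd[OF y] \<Phi>d[OF y])
    moreover have "G y - (r y * (\<Phi> c - \<Phi> y) + (0 - 1 / p y) * Rr y) = Rr y / p y"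
      by (simp add: G_def algebra_simps)
    ultimately show ?thesis by simp
  qed
  have prod_le: "Rr y * (\<Phi> c - \<Phi> y) \<le> (LBINT s=a..ereal y. G s)" if y: "y \<in> I" "y \<le> c" for y
  proof -
    have ay: "a < ereal y" using y by (simp add: einterval_def)
    have "Rr y * (\<Phi> c - \<Phi> y) = (LBINT s=a..ereal y. (\<Phi> c - \<Phi> y) * r s)"
      by (simp add: Rr_def mult.commute)
    also have "\<dots> = (LINT s:einterval a y|lborel. (\<Phi> c - \<Phi> y) * r s)"
      using ay by (simp add: interval_lebesgue_integral_le_eq less_imp_le)
    also have "\<dots> \<le> (LINT s:einterval a y|lborel. G s)"
    proof (rule set_integral_mono)
      show "set_integrable lborel (einterval a (ereal y)) (\<lambda>s. (\<Phi> c - \<Phi> y) * r s)"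
        using rI[OF y(1)] by simp
      show "set_integrable lborel (einterval a (ereal y)) G" by (rule GI[OF y(1)])
      fix s assume s: "s \<in> einterval a (ereal y)"
      have sI: "s \<in> I" and sy: "s \<le> y" using s ein_sub[OF y(1)] by (auto simp: einterval_def)
      show "(\<Phi> c - \<Phi> y) * r s \<le> G s"
        using \<Phi>m[OF sI y(1) sy] rpos[OF sI] unfolding G_def by (intro mult_right_mono) auto
    qed
    also have "\<dots> = (LBINT s=a..ereal y. G s)"
      using ay by (simp add: interval_lebesgue_integral_le_eq less_imp_le)
    finally show ?thesis .
  qed
  have Glim: "((\<lambda>y. LBINT s=a..ereal y. G s) \<longlongrightarrow> 0) (at_left_end a)" by (rule G2[OF c Gint])
  have Plim: "((\<lambda>y. Rr y * (\<Phi> c - \<Phi> y)) \<longlongrightarrow> 0) (at_left_end a)"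
  proof (rule tendsto_sandwich[OF _ _ tendsto_const Glim])
    show "\<forall>\<^sub>F y in at_left_end a. 0 \<le> Rr y * (\<Phi> c - \<Phi> y)"
      using EV[OF c] by eventually_elim (use Rnn \<Phi>m c in \<open>auto intro!: mult_nonneg_nonneg\<close>)
    show "\<forall>\<^sub>F y in at_left_end a. Rr y * (\<Phi> c - \<Phi> y) \<le> (LBINT s=a..ereal y. G s)"
      using EV[OF c] by eventually_elim (rule prod_le, auto)
  qed
  have Hlim: "(H \<longlongrightarrow> 0) (at_left_end a)"
    unfolding H_def[abs_def] using tendsto_diff[OF Glim Plim] by simp
  have xI: "x \<in> I" if "a < ereal x" "ereal x < ereal c" for x
    using that c by (auto simp: einterval_def) (metis less_ereal.simps(1) less_trans)
  have Dx: "DERIV H x :> Rr x / p x" if "a < ereal x" "ereal x < ereal c" for x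
    by (rule Hd[OF xI[OF that]])
  have Rpc: "isCont (\<lambda>s. Rr s / p s) x" if "x \<in> I" for x
    using DERIV_isCont[OF Rd[OF that]] pc[OF that] ppos[OF that] by (intro continuous_intros) auto
  have Cx: "isCont (\<lambda>s. Rr s / p s) x" if "a < ereal x" "ereal x < ereal c" for x
    by (rule Rpc[OF xI[OF that]])
  have AE: "AE x in lborel. a < ereal x \<longrightarrow> ereal x < ereal c \<longrightarrow> 0 \<le> Rr x / p x"
  proof (intro AE_I2 impI)
    fix x assume "a < ereal x" "ereal x < ereal c"
    then have x: "x \<in> I" by (rule xI)
    show "0 \<le> Rr x / p x" using Rnn[OF x] ppos[OF x] by simp
  qed
  have A: "((H \<circ> real_of_ereal) \<longlongrightarrow> 0) (at_right a)"
    using Hlim by (simp add: tendsto_at_left_end[OF a_ne])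
  have "(H \<longlongrightarrow> H c) (at_left c)"
    using DERIV_isCont[OF Hd[OF c]] unfolding isCont_def by (rule filterlim_mono[OF _ order_refl at_le[OF subset_UNIV]])
  then have B: "((H \<circ> real_of_ereal) \<longlongrightarrow> H c) (at_left (ereal c))"
    by (simp add: ereal_tendsto_simps1)
  have "set_integrable lborel (einterval a c) (\<lambda>s. Rr s / p s)"
    by (rule interval_integral_FTC_nonneg(1)[OF ac Dx Cx AE A B])
  then show ?thesis using c'I c rint unfolding Rr_def by blast
qed

end

locale sl2 = sl +
  assumes rint: "\<exists>c\<in>einterval a b. set_integrable lborel (einterval a c) r"
  and Kint: "\<exists>c\<in>einterval a b. set_integrable lborel (einterval a c) (\<lambda>t. (LBINT s=a..t. r s) / p t)"
begin

definition R :: "real \<Rightarrow> real" where "R t = (LBINT s=a..ereal t. r s)"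
definition K :: "real \<Rightarrow> real" where "K t = (LBINT s=a..ereal t. R s / p s)"

lemma r_int: "t \<in> I \<Longrightarrow> set_integrable lborel (einterval a t) r"
proof -
  obtain c where c: "c \<in> I" "set_integrable lborel (einterval a c) r" using rint by blast
  show "t \<in> I \<Longrightarrow> ?thesis" by (rule EXT[OF rc c])
qed

lemma R_deriv: "t \<in> I \<Longrightarrow> (R has_real_derivative r t) (at t)"
  unfolding R_def[abs_def] has_real_derivative_iff_has_vector_derivative
  by (rule G1[OF rc r_int])

lemma R_cont: "t \<in> I \<Longrightarrow> isCont R t"
  by (rule DERIV_isCont[OF R_deriv])

lemma R_lim: "(R \<longlongrightarrow> 0) (at_left_end a)"
proof -
  obtain c where c: "c \<in> I" "set_integrable lborel (einterval a c) r" using rint by blast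
  show ?thesis unfolding R_def[abs_def] by (rule G2[OF c])
qed

lemma R_mono: "s \<in> I \<Longrightarrow> t \<in> I \<Longrightarrow> s \<le> t \<Longrightarrow> R s \<le> R t"
  by (rule mono_deriv[OF R_deriv]) (simp_all add: less_imp_le rpos)

lemma R_nonneg: "t \<in> I \<Longrightarrow> 0 \<le> R t"
  by (rule CMP0[OF R_mono R_lim])

lemma Rp_cont: "t \<in> I \<Longrightarrow> isCont (\<lambda>s. R s / p s) t"
  using R_cont pc ppos by (intro continuous_intros) (auto simp: less_imp_neq[symmetric])

lemma Rp_int: "t \<in> I \<Longrightarrow> set_integrable lborel (einterval a t) (\<lambda>s. R s / p s)"
proof -
  obtain c where c: "c \<in> I" "set_integrable lborel (einterval a c) (\<lambda>s. R s / p s)"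
    using Kint unfolding R_def by blast
  show "t \<in> I \<Longrightarrow> ?thesis" by (rule EXT[OF Rp_cont c])
qed

lemma K_deriv: "t \<in> I \<Longrightarrow> (K has_real_derivative R t / p t) (at t)"
  unfolding K_def[abs_def] has_real_derivative_iff_has_vector_derivative
  by (rule G1[OF Rp_cont Rp_int])

lemma K_cont: "t \<in> I \<Longrightarrow> isCont K t"
  by (rule DERIV_isCont[OF K_deriv])

lemma K_lim: "(K \<longlongrightarrow> 0) (at_left_end a)"
proof -
  obtain c where c: "c \<in> I" "set_integrable lborel (einterval a c) (\<lambda>s. R s / p s)"
    using Kint unfolding R_def by blast
  show ?thesis unfolding K_def[abs_def] by (rule G2[OF c])
qed

lemma K_mono: "s \<in> I \<Longrightarrow> t \<in> I \<Longrightarrow> s \<le> t \<Longrightarrow> K s \<le> K t"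
  by (rule mono_deriv[OF K_deriv]) (simp_all add: R_nonneg ppos less_imp_le)

lemma K_nonneg: "t \<in> I \<Longrightarrow> 0 \<le> K t"
  by (rule CMP0[OF K_mono K_lim])

lemma VBr:
  fixes g :: "real \<Rightarrow> complex"
  assumes gc: "\<And>x. x \<in> I \<Longrightarrow> isCont g x" and B: "0 \<le> B"
    and bd: "\<And>s. s \<in> I \<Longrightarrow> s \<le> t \<Longrightarrow> norm (g s) \<le> B * K s ^ n" and t: "t \<in> I"
  shows "set_integrable lborel (einterval a t) (\<lambda>s. of_real (r s) * g s)"
    and "norm (LBINT s=a..t. of_real (r s) * g s) \<le> B * R t * K t ^ n"
proof -
  have at: "a < ereal t" using t by (auto simp: einterval_def)
  have sI: "s \<in> I" "s \<le> t" if "s \<in> einterval a t" for s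
    using ein_sub[OF t] that by (auto simp: einterval_def)
  have ri: "set_integrable lborel (einterval a t) (\<lambda>s. B * K t ^ n * r s)"
    using r_int[OF t] by simp
  have le: "norm (of_real (r s) * g s) \<le> B * K t ^ n * r s" if s: "s \<in> einterval a t" for s
  proof -
    have rs: "0 < r s" using rpos sI[OF s] by auto
    have "norm (of_real (r s) * g s) = r s * norm (g s)"
      using rs by (simp add: norm_mult)
    also have "\<dots> \<le> r s * (B * K s ^ n)"
      using bd[OF sI[OF s]] rs by (intro mult_left_mono) auto
    also have "\<dots> \<le> r s * (B * K t ^ n)"
      using rs B K_mono[OF sI(1)[OF s] t sI(2)[OF s]] K_nonneg[OF sI(1)[OF s]]
      by (intro mult_left_mono power_mono) auto
    finally show ?thesis by (simp add: algebra_simps)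
  qed
  have gc2: "\<And>x. x \<in> I \<Longrightarrow> isCont (\<lambda>s. complex_of_real (r s) * g s) x"
    using gc rc by (intro continuous_intros) auto
  show int: "set_integrable lborel (einterval a t) (\<lambda>s. of_real (r s) * g s)"
  proof (rule set_integrable_bound[OF ri meas_cont[OF gc2 t]])
    show "AE x in lborel. x \<in> einterval a t \<longrightarrow> norm (of_real (r x) * g x) \<le> norm (B * K t ^ n * r x)"
      by (intro AE_I2 impI) (use le in \<open>force\<close>)
  qed
  have "norm (LBINT s=a..t. of_real (r s) * g s) \<le> (LBINT s=a..t. B * K t ^ n * r s)"
    by (rule norm_LBINT_le[OF int ri le at])
  also have "\<dots> = B * R t * K t ^ n"
    by (simp add: R_def)
  finally show "norm (LBINT s=a..t. of_real (r s) * g s) \<le> B * R t * K t ^ n" .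
qed

lemma FTCK:
  assumes t: "t \<in> I"
  shows "set_integrable lborel (einterval a t) (\<lambda>s. R s / p s * K s ^ n)"
    and "(LBINT s=a..t. R s / p s * K s ^ n) = K t ^ Suc n / Suc n"
proof -
  define F where "F s = K s ^ Suc n / Suc n" for s
  have at: "a < ereal t" using t by (auto simp: einterval_def)
  have xI: "x \<in> I" if "a < ereal x" "ereal x < ereal t" for x
    using that t by (auto simp: einterval_def) (metis less_ereal.simps(1) less_trans)
  have D: "DERIV F x :> R x / p x * K x ^ n" if "x \<in> I" for x
  proof -
    have pn: "p x \<noteq> 0" using ppos[OF that] by simp
    have "DERIV (\<lambda>s. K s ^ Suc n / real (Suc n)) x :> of_nat (Suc n) * ((R x / p x) * K x ^ (Suc n - Suc 0)) / real (Suc n)"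
      by (intro DERIV_cdivide DERIV_power K_deriv[OF that])
    moreover have "of_nat (Suc n) * ((R x / p x) * K x ^ (Suc n - Suc 0)) / real (Suc n) = R x / p x * K x ^ n"
      by (simp del: of_nat_Suc)
    ultimately show ?thesis unfolding F_def[abs_def] by simp
  qed
  have L1: "(F \<longlongrightarrow> 0) (at_left_end a)"
  proof -
    have "((\<lambda>s. K s ^ Suc n / real (Suc n)) \<longlongrightarrow> 0 ^ Suc n / real (Suc n)) (at_left_end a)"
      by (rule tendsto_divide[OF tendsto_power[OF K_lim] tendsto_const]) simp
    then show ?thesis unfolding F_def[abs_def] by simp
  qed
  have L2: "(F \<longlongrightarrow> F t) (at_left t)"
    using DERIV_isCont[OF D[OF t]] unfolding isCont_def by (rule filterlim_mono[OF _ order_refl at_le[OF subset_UNIV]])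
  have Dx: "DERIV F x :> R x / p x * K x ^ n" if "a < ereal x" "ereal x < ereal t" for x
    by (rule D[OF xI[OF that]])
  have Cx: "isCont (\<lambda>s. R s / p s * K s ^ n) x" if "a < ereal x" "ereal x < ereal t" for x
    by (rule isCont_mult[OF Rp_cont[OF xI[OF that]] isCont_power[OF K_cont[OF xI[OF that]]]])
  have AE: "AE x in lborel. a < ereal x \<longrightarrow> ereal x < ereal t \<longrightarrow> 0 \<le> R x / p x * K x ^ n"
  proof (intro AE_I2 impI)
    fix x assume "a < ereal x" "ereal x < ereal t"
    then have x: "x \<in> I" by (rule xI)
    show "0 \<le> R x / p x * K x ^ n"
      using R_nonneg[OF x] K_nonneg[OF x] ppos[OF x] by simp
  qed
  have A: "((F \<circ> real_of_ereal) \<longlongrightarrow> 0) (at_right a)"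
    using L1 by (simp add: tendsto_at_left_end[OF a_ne])
  have B: "((F \<circ> real_of_ereal) \<longlongrightarrow> F t) (at_left (ereal t))"
    using L2 by (simp add: ereal_tendsto_simps1)
  note FT = interval_integral_FTC_nonneg[of a "ereal t" F "\<lambda>s. R s / p s * K s ^ n", OF at Dx Cx AE A B]
  show "set_integrable lborel (einterval a t) (\<lambda>s. R s / p s * K s ^ n)"
    by (rule FT(1))
  show "(LBINT s=a..t. R s / p s * K s ^ n) = K t ^ Suc n / Suc n"
    using FT(2) by (simp add: F_def)
qed

lemma VBp:
  fixes h :: "real \<Rightarrow> complex"
  assumes hc: "\<And>x. x \<in> I \<Longrightarrow> isCont h x" and B: "0 \<le> B"
    and bd: "\<And>s. s \<in> I \<Longrightarrow> s \<le> t \<Longrightarrow> norm (h s) \<le> B * R s * K s ^ n" and t: "t \<in> I"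
  shows "set_integrable lborel (einterval a t) (\<lambda>s. h s / of_real (p s))"
    and "norm (LBINT s=a..t. h s / of_real (p s)) \<le> B * K t ^ Suc n / Suc n"
proof -
  have at: "a < ereal t" using t by (auto simp: einterval_def)
  have sI: "s \<in> I" "s \<le> t" if "s \<in> einterval a t" for s
    using ein_sub[OF t] that by (auto simp: einterval_def)
  have fi: "set_integrable lborel (einterval a t) (\<lambda>s. B * (R s / p s * K s ^ n))"
    by (rule set_integrable_mult_right) (rule FTCK(1)[OF t])
  have le: "norm (h s / of_real (p s)) \<le> B * (R s / p s * K s ^ n)" if s: "s \<in> einterval a t" for s
  proof -
    have ps: "0 < p s" using ppos sI[OF s] by auto
    have "norm (h s / of_real (p s)) = norm (h s) / p s"
      using ps by (simp add: norm_divide)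
    also have "\<dots> \<le> (B * R s * K s ^ n) / p s"
      using bd[OF sI[OF s]] ps by (intro divide_right_mono) auto
    finally show ?thesis by (simp add: algebra_simps)
  qed
  have hc2: "\<And>x. x \<in> I \<Longrightarrow> isCont (\<lambda>s. h s / complex_of_real (p s)) x"
    using hc pc ppos by (intro continuous_intros) (auto simp: less_imp_neq[symmetric])
  have nn: "0 \<le> B * (R s / p s * K s ^ n)" if "s \<in> einterval a t" for s
    using sI[OF that] B R_nonneg K_nonneg ppos by (auto intro!: mult_nonneg_nonneg divide_nonneg_pos)
  show int: "set_integrable lborel (einterval a t) (\<lambda>s. h s / of_real (p s))"
  proof (rule set_integrable_bound[OF fi meas_cont[OF hc2 t]])
    show "AE x in lborel. x \<in> einterval a t \<longrightarrow> norm (h x / of_real (p x)) \<le> norm (B * (R x / p x * K x ^ n))"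
    proof (intro AE_I2 impI)
      fix x assume x: "x \<in> einterval a t"
      show "norm (h x / of_real (p x)) \<le> norm (B * (R x / p x * K x ^ n))"
        using le[OF x] nn[OF x] by (metis real_norm_def abs_of_nonneg)
    qed
  qed
  have "norm (LBINT s=a..t. h s / of_real (p s)) \<le> (LBINT s=a..t. B * (R s / p s * K s ^ n))"
    by (rule norm_LBINT_le[OF int fi le at])
  also have "\<dots> = B * (K t ^ Suc n / Suc n)"
    by (simp only: interval_lebesgue_integral_mult_right FTCK(2)[OF t])
  finally show "norm (LBINT s=a..t. h s / of_real (p s)) \<le> B * K t ^ Suc n / Suc n" by simp
qed

lemma EV2:
  assumes ev: "eventually P (at_left_end a)" and t0: "t0 \<in> I"
  shows "\<exists>d\<in>I. d \<le> t0 \<and> (\<forall>t\<in>I. t < d \<longrightarrow> P t)"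
proof -
  have at: "a < ereal t0" using t0 by (auto simp: einterval_def)
  from ev have "\<exists>b'>a. \<forall>y>a. y < b' \<longrightarrow> P (real_of_ereal y)"
    unfolding at_left_end_eq[OF a_ne] eventually_filtermap by (subst (asm) eventually_at_right[OF at])
  then obtain b' where b': "a < b'" "\<And>y. a < y \<Longrightarrow> y < b' \<Longrightarrow> P (real_of_ereal y)" by blast
  have "a < min b' (ereal t0)" using b' at by simp
  then obtain d where z: "a < ereal d" "ereal d < min b' (ereal t0)" using ereal_dense2 by blast
  have db: "ereal d < b'" and dt: "d < t0" using z(2) by auto
  have t0b: "ereal t0 < b" using t0 by (simp add: einterval_def)
  show ?thesis
  proof (intro bexI[of _ d] conjI ballI impI)
    have "ereal d < b" using dt t0b by (meson ereal_less_eq(3) less_imp_le order_le_less_trans)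
    then show "d \<in> I" using z(1) by (simp add: einterval_def)
    show "d \<le> t0" using dt by simp
    fix t assume t: "t \<in> I" "t < d"
    have "a < ereal t" using t by (auto simp: einterval_def)
    moreover have "ereal t < b'" using t(2) db by (meson ereal_less_eq(3) less_imp_le order_le_less_trans)
    ultimately show "P t" using b'(2)[of "ereal t"] by simp
  qed
qed

lemma FTCa:
  fixes F f :: "real \<Rightarrow> complex"
  assumes dF: "\<And>x. x \<in> I \<Longrightarrow> (F has_vector_derivative f x) (at x)"
    and cf: "\<And>x. x \<in> I \<Longrightarrow> isCont f x" and lim: "(F \<longlongrightarrow> 0) (at_left_end a)"
    and t: "t \<in> I" and int: "set_integrable lborel (einterval a t) f"
  shows "(LBINT s=a..t. f s) = F t"
proof -
  have at: "a < ereal t" using t by (auto simp: einterval_def)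
  have xI: "x \<in> I" if "a < ereal x" "ereal x < ereal t" for x
    using that t by (auto simp: einterval_def) (metis less_ereal.simps(1) less_trans)
  have Dx: "(F has_vector_derivative f x) (at x)" if "a < ereal x" "ereal x < ereal t" for x
    by (rule dF[OF xI[OF that]])
  have Cx: "isCont f x" if "a < ereal x" "ereal x < ereal t" for x
    by (rule cf[OF xI[OF that]])
  have A: "((F \<circ> real_of_ereal) \<longlongrightarrow> 0) (at_right a)"
    using lim by (simp add: tendsto_at_left_end[OF a_ne])
  have "isCont F t" using has_vector_derivative_continuous[OF dF[OF t]] by simp
  then have "(F \<longlongrightarrow> F t) (at_left t)"
    unfolding isCont_def by (rule filterlim_mono[OF _ order_refl at_le[OF subset_UNIV]])
  then have B: "((F \<circ> real_of_ereal) \<longlongrightarrow> F t) (at_left (ereal t))"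
    by (simp add: ereal_tendsto_simps1)
  have "(LBINT s=a..ereal t. f s) = F t - 0"
    by (rule interval_integral_FTC_integrable[OF at Dx Cx int A B])
  then show ?thesis by simp
qed

lemma U:
  fixes u u' q :: "real \<Rightarrow> complex" and z :: complex
  assumes du: "\<And>x. x \<in> I \<Longrightarrow> (u has_vector_derivative u' x) (at x)"
    and qd: "\<And>x. x \<in> I \<Longrightarrow> q x = of_real (p x) * u' x"
    and dq: "\<And>x. x \<in> I \<Longrightarrow> (q has_vector_derivative (- (z * of_real (r x) * u x))) (at x)"
    and ul: "(u \<longlongrightarrow> 0) (at_left_end a)" and ql: "(q \<longlongrightarrow> 0) (at_left_end a)"
    and x: "x \<in> I"
  shows "u x = 0"
proof -
  have uc: "isCont u t" if "t \<in> I" for t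
    using has_vector_derivative_continuous[OF du[OF that]] by simp
  have qc: "isCont q t" if "t \<in> I" for t
    using has_vector_derivative_continuous[OF dq[OF that]] by simp
  have "eventually (\<lambda>t. dist (u t) 0 < 1) (at_left_end a)"
    using tendstoD[OF ul] by simp
  from EV2[OF this x] obtain d where d0: "d \<in> I" "d \<le> x" "\<forall>t\<in>I. t < d \<longrightarrow> dist (u t) 0 < 1"
    by blast
  then have d: "d \<in> I" "d \<le> x" "\<And>t. t \<in> I \<Longrightarrow> t < d \<Longrightarrow> norm (u t) < 1"
    by auto
  have "continuous_on {d..x} u"
    using Icc_sub[OF d(1) x] uc by (intro continuous_at_imp_continuous_on) auto
  then have "bounded (u ` {d..x})"
    by (intro compact_imp_bounded compact_continuous_image compact_Icc)
  then obtain M' where M'0: "\<forall>t\<in>{d..x}. norm (u t) \<le> M'"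
    unfolding bounded_pos by force
  then have M': "\<And>t. t \<in> {d..x} \<Longrightarrow> norm (u t) \<le> M'" by blast
  define M where "M = max 1 M'"
  have M0: "0 \<le> M" by (simp add: M_def)
  have bd0: "norm (u t) \<le> M" if "t \<in> I" "t \<le> x" for t
  proof (cases "t < d")
    case True then show ?thesis using d(3)[OF that(1)] by (simp add: M_def)
  next
    case False then show ?thesis using M'[of t] that by (simp add: M_def)
  qed
  have pne: "p s \<noteq> 0" if "s \<in> I" for s using ppos[OF that] by simp
  have ind: "\<forall>t\<in>I. t \<le> x \<longrightarrow> norm (u t) \<le> (M * norm z ^ n / fact n) * K t ^ n" for n
  proof (induction n)
    case 0 then show ?case using bd0 by simp
  next
    case (Suc n)
    define B where "B = norm z * (M * norm z ^ n / fact n)"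
    have B0: "0 \<le> B" using M0 by (simp add: B_def)
    have gc: "\<And>s. s \<in> I \<Longrightarrow> isCont (\<lambda>s. - (z * u s)) s"
      using uc by (intro continuous_intros) auto
    have gb: "norm (- (z * u s)) \<le> B * K s ^ n" if "s \<in> I" "s \<le> x" for s
    proof -
      have "norm (- (z * u s)) = norm z * norm (u s)" by (simp add: norm_mult)
      also have "\<dots> \<le> norm z * ((M * norm z ^ n / fact n) * K s ^ n)"
        using Suc.IH that by (intro mult_left_mono) auto
      finally show ?thesis by (simp add: B_def algebra_simps)
    qed
    have qrep: "q t = (LBINT s=a..t. of_real (r s) * (- (z * u s)))" if t: "t \<in> I" "t \<le> x" for t
    proof -
      have "(LBINT s=a..t. of_real (r s) * (- (z * u s))) = q t"
      proof (rule FTCa[OF _ _ ql t(1)])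
        show "(q has_vector_derivative of_real (r s) * (- (z * u s))) (at s)" if "s \<in> I" for s
          using dq[OF that] by (simp add: algebra_simps)
        show "isCont (\<lambda>s. of_real (r s) * (- (z * u s))) s" if "s \<in> I" for s
          using that uc rc by (intro continuous_intros) auto
        show "set_integrable lborel (einterval a t) (\<lambda>s. of_real (r s) * (- (z * u s)))"
          by (rule VBr(1)[where n=n, OF gc B0 _ t(1)]) (use gb t in auto)
      qed
      then show ?thesis by simp
    qed
    have qb: "norm (q s) \<le> B * R s * K s ^ n" if "s \<in> I" "s \<le> x" for s
      unfolding qrep[OF that] by (rule VBr(2)[where n=n, OF gc B0 _ that(1)]) (use gb that in auto)
    show ?case
    proof (intro ballI impI)
      fix t assume t: "t \<in> I" "t \<le> x"
      have qb': "\<And>s. s \<in> I \<Longrightarrow> s \<le> t \<Longrightarrow> norm (q s) \<le> B * R s * K s ^ n"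
        using qb t by auto
      have "(LBINT s=a..t. q s / of_real (p s)) = u t"
      proof (rule FTCa[OF _ _ ul t(1)])
        show "(u has_vector_derivative q s / of_real (p s)) (at s)" if "s \<in> I" for s
          using du[OF that] qd[OF that] pne[OF that] by simp
        show "isCont (\<lambda>s. q s / of_real (p s)) s" if "s \<in> I" for s
          using that qc pc pne by (intro continuous_intros) auto
        show "set_integrable lborel (einterval a t) (\<lambda>s. q s / of_real (p s))"
          by (rule VBp(1)[OF qc B0 qb' t(1)])
      qed
      then have "norm (u t) \<le> B * K t ^ Suc n / Suc n"
        using VBp(2)[OF qc B0 qb' t(1)] by simp
      also have "\<dots> = (M * norm z ^ Suc n / fact (Suc n)) * K t ^ Suc n"
        by (simp add: B_def field_simps)
      finally show "norm (u t) \<le> (M * norm z ^ Suc n / fact (Suc n)) * K t ^ Suc n" .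
    qed
  qed
  have lim0: "(\<lambda>n. M * ((norm z * K x) ^ n / fact n)) \<longlonglongrightarrow> 0"
  proof -
    have S: "summable (\<lambda>n. (norm z * K x) ^ n /\<^sub>R fact n)" by (rule summable_exp_generic)
    have "(\<lambda>n. (norm z * K x) ^ n / fact n) \<longlonglongrightarrow> 0"
      using summable_LIMSEQ_zero[OF S] by (simp add: divide_inverse mult.commute)
    then show ?thesis by (rule tendsto_mult_right_zero)
  qed
  have "norm (u x) \<le> 0"
  proof (rule LIMSEQ_le_const[OF lim0])
    show "\<exists>N. \<forall>n\<ge>N. norm (u x) \<le> M * ((norm z * K x) ^ n / fact n)"
    proof (intro exI[of _ 0] allI impI)
      fix n :: nat
      have "norm (u x) \<le> (M * norm z ^ n / fact n) * K x ^ n" using ind[of n] x by auto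
      also have "\<dots> = M * ((norm z * K x) ^ n / fact n)" by (simp add: power_mult_distrib)
      finally show "norm (u x) \<le> M * ((norm z * K x) ^ n / fact n)" .
    qed
  qed
  then show ?thesis by simp
qed

primrec phi :: "nat \<Rightarrow> real \<Rightarrow> complex" where
  "phi 0 = (\<lambda>x. 1)"
| "phi (Suc n) = (\<lambda>x. LBINT t=a..ereal x. (LBINT s=a..ereal t. of_real (r s) * phi n s) / of_real (p t))"

definition psi :: "nat \<Rightarrow> real \<Rightarrow> complex" where
  "psi n t = (LBINT s=a..ereal t. of_real (r s) * phi n s)"

lemma phi_Suc: "phi (Suc n) x = (LBINT t=a..ereal x. psi n t / of_real (p t))"
  by (simp add: psi_def)

definition phinv :: "nat \<Rightarrow> bool" where "phinv n \<longleftrightarrow> (\<forall>x\<in>I. isCont (phi n) x) \<and> (\<forall>x\<in>I. norm (phi n x) \<le> (1 / fact n) * K x ^ n)"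

lemma psi_facts:
  assumes iv: "phinv n"
  shows "\<And>t. t \<in> I \<Longrightarrow> set_integrable lborel (einterval a t) (\<lambda>s. of_real (r s) * phi n s)"
    and "\<And>t. t \<in> I \<Longrightarrow> norm (psi n t) \<le> (1 / fact n) * R t * K t ^ n"
    and "\<And>x. x \<in> I \<Longrightarrow> (psi n has_vector_derivative of_real (r x) * phi n x) (at x)"
    and "\<And>x. x \<in> I \<Longrightarrow> isCont (psi n) x"
    and "\<And>t. t \<in> I \<Longrightarrow> set_integrable lborel (einterval a t) (\<lambda>s. psi n s / of_real (p s))"
    and "\<And>t. t \<in> I \<Longrightarrow> norm (phi (Suc n) t) \<le> (1 / fact (Suc n)) * K t ^ Suc n"
    and "\<And>x. x \<in> I \<Longrightarrow> (phi (Suc n) has_vector_derivative psi n x / of_real (p x)) (at x)"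
    and "\<And>x. x \<in> I \<Longrightarrow> isCont (phi (Suc n)) x"
proof -
  have pc': "\<And>x. x \<in> I \<Longrightarrow> isCont (phi n) x" and pb: "\<And>x. x \<in> I \<Longrightarrow> norm (phi n x) \<le> (1 / fact n) * K x ^ n"
    using iv by (auto simp: phinv_def)
  have B0: "0 \<le> 1 / (fact n :: real)" by simp
  show int1: "\<And>t. t \<in> I \<Longrightarrow> set_integrable lborel (einterval a t) (\<lambda>s. of_real (r s) * phi n s)"
    by (rule VBr(1)[OF pc' B0 pb])
  show pb2: "\<And>t. t \<in> I \<Longrightarrow> norm (psi n t) \<le> (1 / fact n) * R t * K t ^ n"
    unfolding psi_def by (rule VBr(2)[OF pc' B0 pb])
  have c1: "\<And>x. x \<in> I \<Longrightarrow> isCont (\<lambda>s. of_real (r s) * phi n s) x"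
    using rc pc' by (intro continuous_intros) auto
  show d1: "\<And>x. x \<in> I \<Longrightarrow> (psi n has_vector_derivative of_real (r x) * phi n x) (at x)"
    unfolding psi_def[abs_def] by (rule G1[OF c1 int1])
  show c2: "\<And>x. x \<in> I \<Longrightarrow> isCont (psi n) x"
    using has_vector_derivative_continuous[OF d1] by simp
  show int2: "\<And>t. t \<in> I \<Longrightarrow> set_integrable lborel (einterval a t) (\<lambda>s. psi n s / of_real (p s))"
    by (rule VBp(1)[OF c2 B0 pb2])
  show "norm (phi (Suc n) t) \<le> (1 / fact (Suc n)) * K t ^ Suc n" if t: "t \<in> I" for t
  proof -
    have "norm (phi (Suc n) t) \<le> (1 / fact n) * K t ^ Suc n / Suc n"
      unfolding phi_Suc by (rule VBp(2)[OF c2 B0 pb2 t])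
    also have "\<dots> = (1 / fact (Suc n)) * K t ^ Suc n" by (simp add: field_simps)
    finally show ?thesis .
  qed
  have c3: "\<And>x. x \<in> I \<Longrightarrow> isCont (\<lambda>s. psi n s / of_real (p s)) x"
    using c2 pc ppos by (intro continuous_intros) (auto simp: less_imp_neq[symmetric])
  show d2: "\<And>x. x \<in> I \<Longrightarrow> (phi (Suc n) has_vector_derivative psi n x / of_real (p x)) (at x)"
  proof -
    fix x assume x: "x \<in> I"
    have "phi (Suc n) = (\<lambda>x. LBINT t=a..ereal x. psi n t / of_real (p t))"
      using phi_Suc by auto
    then show "(phi (Suc n) has_vector_derivative psi n x / of_real (p x)) (at x)"
      using G1[OF c3 int2 x] by simp
  qed
  show "\<And>x. x \<in> I \<Longrightarrow> isCont (phi (Suc n)) x"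
    using has_vector_derivative_continuous[OF d2] by simp
qed

lemma inv_all: "phinv n"
proof (induction n)
  case 0 then show ?case by (simp add: phinv_def)
next
  case (Suc n)
  then show ?case using psi_facts(6,8)[OF Suc] by (simp add: phinv_def)
qed

lemmas psiF = psi_facts[OF inv_all]

lemma phi_bd: "x \<in> I \<Longrightarrow> norm (phi n x) \<le> (1 / fact n) * K x ^ n"
  using inv_all[of n] by (simp add: phinv_def)

lemma phi_cont: "x \<in> I \<Longrightarrow> isCont (phi n) x"
  using inv_all[of n] by (simp add: phinv_def)

lemma VDS:
  fixes f f' :: "nat \<Rightarrow> real \<Rightarrow> complex" and S :: "real set"
  assumes cS: "convex S"
    and d: "\<And>n t. t \<in> S \<Longrightarrow> (f n has_vector_derivative f' n t) (at t within S)"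
    and u: "uniform_limit S (\<lambda>n t. \<Sum>i<n. f' i t) g' sequentially"
    and x: "x \<in> S" and sm: "\<And>t. t \<in> S \<Longrightarrow> summable (\<lambda>n. f n t)"
  shows "((\<lambda>t. \<Sum>n. f n t) has_vector_derivative g' x) (at x within S)"
proof -
  have "\<exists>g. \<forall>t\<in>S. (\<lambda>n. f n t) sums g t \<and> (g has_derivative (\<lambda>h. h *\<^sub>R g' t)) (at t within S)"
  proof (rule has_derivative_series[OF cS _ _ x])
    show "(f n has_derivative (\<lambda>h. h *\<^sub>R f' n t)) (at t within S)" if "t \<in> S" for n t
      using d[OF that] by (simp add: has_vector_derivative_def)
    show "\<forall>\<^sub>F n in sequentially. \<forall>t\<in>S. \<forall>h. norm ((\<Sum>i<n. h *\<^sub>R f' i t) - h *\<^sub>R g' t) \<le> e * norm h"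
      if e: "e > 0" for e
      using uniform_limitD[OF u e]
    proof eventually_elim
      case (elim n)
      show ?case
      proof (intro ballI allI)
        fix t h assume t: "t \<in> S"
        have "norm ((\<Sum>i<n. h *\<^sub>R f' i t) - h *\<^sub>R g' t) = norm (h *\<^sub>R ((\<Sum>i<n. f' i t) - g' t))"
          by (simp add: scaleR_sum_right scaleR_diff_right)
        also have "\<dots> = \<bar>h\<bar> * norm ((\<Sum>i<n. f' i t) - g' t)" by simp
        also have "\<dots> \<le> \<bar>h\<bar> * e"
          using elim[rule_format, OF t] by (intro mult_left_mono) (auto simp: dist_norm)
        finally show "norm ((\<Sum>i<n. h *\<^sub>R f' i t) - h *\<^sub>R g' t) \<le> e * norm h" by (simp add: mult.commute)
      qed
    qed
    show "(\<lambda>n. f n x) sums (\<Sum>n. f n x)" using sm[OF x] by (simp add: summable_sums)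
  qed
  then obtain g where g: "\<And>t. t \<in> S \<Longrightarrow> (\<lambda>n. f n t) sums g t"
    "\<And>t. t \<in> S \<Longrightarrow> (g has_derivative (\<lambda>h. h *\<^sub>R g' t)) (at t within S)" by blast
  have "((\<lambda>t. \<Sum>n. f n t) has_derivative (\<lambda>h. h *\<^sub>R g' x)) (at x within S)"
    by (rule has_derivative_transform[OF x _ g(2)[OF x]]) (use g(1) in \<open>simp add: sums_iff\<close>)
  then show ?thesis by (simp add: has_vector_derivative_def)
qed

definition E :: "real \<Rightarrow> nat \<Rightarrow> real" where "E c n = c ^ n / fact n"

lemma E_sums: "E c sums exp c"
proof -
  have "(\<lambda>n. c ^ n /\<^sub>R fact n) = E c" by (auto simp: E_def field_simps)
  then show ?thesis using exp_converges[of c] by simp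
qed

lemma E_summable: "summable (E c)" using E_sums sums_summable by blast

lemma E_Suc_sums: "(\<lambda>n. E c (Suc n)) sums (exp c - 1)"
  using E_sums[of c] by (subst sums_Suc_iff) (simp add: E_def)

lemma E_nonneg: "0 \<le> c \<Longrightarrow> 0 \<le> E c n" by (simp add: E_def)

lemma nbhd: assumes x: "x \<in> I" shows "\<exists>d e. d \<in> I \<and> e \<in> I \<and> d < x \<and> x < e"
proof -
  from x have ax: "a < ereal x" and xb: "ereal x < b" by (auto simp: einterval_def)
  obtain d where d: "a < ereal d" "ereal d < ereal x" using ereal_dense2[OF ax] by blast
  obtain e where e: "ereal x < ereal e" "ereal e < b" using ereal_dense2[OF xb] by blast
  have "d \<in> I" "e \<in> I" using d e ax xb by (auto simp: einterval_def) (metis less_ereal.simps(1) less_trans)+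
  then show ?thesis using d e by auto
qed

definition W :: "complex \<Rightarrow> real \<Rightarrow> complex" where "W z x = (\<Sum>n. (-z)^n * phi n x)"
definition Q :: "complex \<Rightarrow> real \<Rightarrow> complex" where "Q z x = (\<Sum>n. (-z)^(Suc n) * psi n x)"

lemma W_term_bd: assumes x: "x \<in> I" shows "norm ((-z)^n * phi n x) \<le> E (norm z * K x) n"
proof -
  have "norm ((-z)^n * phi n x) = norm z ^ n * norm (phi n x)" by (simp add: norm_mult norm_power)
  also have "\<dots> \<le> norm z ^ n * ((1 / fact n) * K x ^ n)"
    by (intro mult_left_mono phi_bd x) auto
  also have "\<dots> = E (norm z * K x) n" by (simp add: E_def power_mult_distrib)
  finally show ?thesis .
qed

lemma W_sums: assumes x: "x \<in> I" shows "(\<lambda>n. (-z)^n * phi n x) sums W z x"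
proof -
  have "summable (\<lambda>n. (-z)^n * phi n x)"
    by (rule summable_comparison_test'[OF E_summable W_term_bd[OF x]])
  then show ?thesis by (simp add: W_def summable_sums)
qed

lemma Q_term_bd: assumes x: "x \<in> I"
  shows "norm ((-z)^(Suc n) * psi n x) \<le> norm z * R x * E (norm z * K x) n"
proof -
  have "norm ((-z)^(Suc n) * psi n x) = norm z ^ Suc n * norm (psi n x)" by (simp add: norm_mult norm_power)
  also have "\<dots> \<le> norm z ^ Suc n * ((1 / fact n) * R x * K x ^ n)"
    by (intro mult_left_mono psiF(2) x) auto
  also have "\<dots> = norm z * R x * E (norm z * K x) n" by (simp add: E_def power_mult_distrib field_simps)
  finally show ?thesis .
qed

lemma Q_sums: assumes x: "x \<in> I" shows "(\<lambda>n. (-z)^(Suc n) * psi n x) sums Q z x"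
proof -
  have "summable (\<lambda>n. norm z * R x * E (norm z * K x) n)"
    by (rule summable_mult[OF E_summable])
  then have "summable (\<lambda>n. (-z)^(Suc n) * psi n x)"
    by (rule summable_comparison_test'[OF _ Q_term_bd[OF x]])
  then show ?thesis by (simp add: Q_def summable_sums)
qed

lemma W_bd: assumes x: "x \<in> I" shows "norm (W z x) \<le> exp (K x * norm z)"
proof -
  have "norm (W z x) \<le> (\<Sum>n. E (norm z * K x) n)"
    unfolding W_def by (rule norm_suminf_le[OF W_term_bd[OF x] E_summable])
  then show ?thesis using E_sums sums_unique by (metis mult.commute)
qed

lemma W_m1: assumes x: "x \<in> I" shows "norm (W z x - 1) \<le> exp (norm z * K x) - 1"
proof -
  have s: "(\<lambda>n. (-z)^(Suc n) * phi (Suc n) x) sums (W z x - 1)"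
    using W_sums[OF x, of z] by (subst sums_Suc_iff) simp
  have "norm (W z x - 1) \<le> (\<Sum>n. E (norm z * K x) (Suc n))"
    unfolding sums_unique[OF s] by (rule norm_suminf_le[OF W_term_bd[OF x]]) (use E_Suc_sums sums_summable in blast)
  then show ?thesis using E_Suc_sums sums_unique by metis
qed

lemma Q_bd: assumes x: "x \<in> I" shows "norm (Q z x) \<le> norm z * R x * exp (norm z * K x)"
proof -
  have "norm (Q z x) \<le> (\<Sum>n. norm z * R x * E (norm z * K x) n)"
    unfolding Q_def by (rule norm_suminf_le[OF Q_term_bd[OF x] summable_mult[OF E_summable]])
  also have "\<dots> = norm z * R x * exp (norm z * K x)"
    using sums_unique[OF sums_mult[OF E_sums]] by metis
  finally show ?thesis .
qed

lemma W_deriv: assumes x: "x \<in> I" shows "(W z has_vector_derivative Q z x / of_real (p x)) (at x)"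
proof -
  obtain d e where de: "d \<in> I" "e \<in> I" "d < x" "x < e" using nbhd[OF x] by blast
  define S where "S = {d..e}"
  have SI: "S \<subseteq> I" using Icc_sub[OF de(1,2)] S_def by simp
  have xS: "x \<in> S" using de by (simp add: S_def)
  have "\<exists>y\<in>S. \<forall>t\<in>S. p y \<le> p t"
    by (rule continuous_attains_inf) (use SI pc de in \<open>auto simp: S_def intro!: continuous_at_imp_continuous_on\<close>)
  then obtain y where y: "y \<in> S" "\<And>t. t \<in> S \<Longrightarrow> p y \<le> p t" by blast
  define m where "m = p y"
  have m0: "0 < m" using ppos y(1) SI by (auto simp: m_def)
  define dphi where "dphi n t = (case n of 0 \<Rightarrow> 0 | Suc k \<Rightarrow> psi k t / of_real (p t))" for n t
  have dd: "((\<lambda>t. (-z)^n * phi n t) has_vector_derivative (-z)^n * dphi n t) (at t within S)" if t: "t \<in> S" for n t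
  proof (cases n)
    case 0 then show ?thesis by (simp add: dphi_def)
  next
    case (Suc k)
    have "(phi (Suc k) has_vector_derivative psi k t / of_real (p t)) (at t within S)"
      using psiF(7)[of t k] t SI by (auto intro: has_vector_derivative_at_within)
    then have "((\<lambda>t. (-z)^(Suc k) * phi (Suc k) t) has_vector_derivative (-z)^(Suc k) * (psi k t / of_real (p t))) (at t within S)"
      by (rule has_vector_derivative_mult_right)
    then show ?thesis by (simp only: dphi_def Suc nat.case(2))
  qed
  define Mb where "Mb n = (case n of 0 \<Rightarrow> 0 | Suc k \<Rightarrow> norm z * (R e / m) * E (norm z * K e) k)" for n
  have bd: "norm ((-z)^n * dphi n t) \<le> Mb n" if t: "t \<in> S" for n t
  proof (cases n)
    case 0 then show ?thesis by (simp add: dphi_def Mb_def)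
  next
    case (Suc k)
    have tI: "t \<in> I" and te: "t \<le> e" using t SI by (auto simp: S_def)
    have pt: "m \<le> p t" using y(2)[OF t] by (simp add: m_def)
    have "norm (psi k t) \<le> (1 / fact k) * R t * K t ^ k" by (rule psiF(2)[OF tI])
    also have "\<dots> \<le> (1 / fact k) * R e * K e ^ k"
      using R_mono[OF tI de(2) te] K_mono[OF tI de(2) te] K_nonneg[OF tI] R_nonneg[OF tI]
      by (intro mult_mono power_mono mult_left_mono) (auto intro!: R_nonneg K_nonneg de(2) zero_le_power)
    finally have ps: "norm (psi k t) \<le> (1 / fact k) * R e * K e ^ k" .
    have X0: "0 \<le> (1 / fact k) * R e * K e ^ k" using R_nonneg[OF de(2)] K_nonneg[OF de(2)] by simp
    have "norm ((-z)^n * dphi n t) = norm z ^ Suc k * (norm (psi k t) / p t)"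
      using Suc ppos[OF tI] by (simp add: dphi_def norm_mult norm_power norm_divide)
    also have "\<dots> \<le> norm z ^ Suc k * (((1 / fact k) * R e * K e ^ k) / m)"
    proof (intro mult_left_mono)
      have "norm (psi k t) / p t \<le> ((1 / fact k) * R e * K e ^ k) / p t"
        using ps ppos[OF tI] by (intro divide_right_mono) auto
      also have "\<dots> \<le> ((1 / fact k) * R e * K e ^ k) / m"
        using X0 m0 pt by (intro divide_left_mono) auto
      finally show "norm (psi k t) / p t \<le> ((1 / fact k) * R e * K e ^ k) / m" .
    qed simp
    also have "\<dots> = Mb n" using Suc by (simp add: Mb_def E_def power_mult_distrib field_simps)
    finally show ?thesis .
  qed
  have sM: "summable Mb"
  proof -
    have "summable (\<lambda>k. norm z * (R e / m) * E (norm z * K e) k)" by (rule summable_mult[OF E_summable])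
    then have "summable (\<lambda>k. Mb (Suc k))" unfolding Mb_def by simp
    then show ?thesis by (simp add: summable_Suc_iff)
  qed
  have unif: "uniform_limit S (\<lambda>n t. \<Sum>i<n. (-z)^i * dphi i t) (\<lambda>t. \<Sum>i. (-z)^i * dphi i t) sequentially"
    by (rule Weierstrass_m_test[OF bd sM])
  have "((\<lambda>t. \<Sum>n. (-z)^n * phi n t) has_vector_derivative (\<Sum>i. (-z)^i * dphi i x)) (at x within S)"
    by (rule VDS[OF _ dd unif xS]) (use W_sums SI in \<open>auto simp: S_def sums_iff\<close>)
  then have D: "(W z has_vector_derivative (\<Sum>i. (-z)^i * dphi i x)) (at x)"
    using de by (simp add: S_def at_within_Icc_at W_def[abs_def])
  have "(\<lambda>n. (-z)^(Suc n) * dphi (Suc n) x) sums (Q z x / of_real (p x))"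
    using sums_divide[OF Q_sums[OF x, of z], of "of_real (p x)"] by (simp add: dphi_def)
  then have "(\<lambda>n. (-z)^n * dphi n x) sums (Q z x / of_real (p x))"
    by (subst (asm) sums_Suc_iff) (simp add: dphi_def)
  then show ?thesis using D by (simp add: sums_iff)
qed

lemma Q_deriv: assumes x: "x \<in> I" shows "(Q z has_vector_derivative - (z * of_real (r x) * W z x)) (at x)"
proof -
  obtain d e where de: "d \<in> I" "e \<in> I" "d < x" "x < e" using nbhd[OF x] by blast
  define S where "S = {d..e}"
  have SI: "S \<subseteq> I" using Icc_sub[OF de(1,2)] S_def by simp
  have xS: "x \<in> S" using de by (simp add: S_def)
  have "\<exists>y\<in>S. \<forall>t\<in>S. r t \<le> r y"
    by (rule continuous_attains_sup) (use SI rc de in \<open>auto simp: S_def intro!: continuous_at_imp_continuous_on\<close>)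
  then obtain y where y: "y \<in> S" "\<And>t. t \<in> S \<Longrightarrow> r t \<le> r y" by blast
  define m where "m = r y"
  have m0: "0 < m" using rpos y(1) SI by (auto simp: m_def)
  have dd: "((\<lambda>t. (-z)^(Suc n) * psi n t) has_vector_derivative (-z)^(Suc n) * (of_real (r t) * phi n t)) (at t within S)" if t: "t \<in> S" for n t
  proof -
    have "(psi n has_vector_derivative of_real (r t) * phi n t) (at t within S)"
      using psiF(3)[of t n] t SI by (auto intro: has_vector_derivative_at_within)
    then show ?thesis by (rule has_vector_derivative_mult_right)
  qed
  define Mb where "Mb n = norm z * m * E (norm z * K e) n" for n
  have bd: "norm ((-z)^(Suc n) * (of_real (r t) * phi n t)) \<le> Mb n" if t: "t \<in> S" for n t
  proof -
    have tI: "t \<in> I" and te: "t \<le> e" using t SI by (auto simp: S_def)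
    have rt: "0 < r t" "r t \<le> m" using rpos[OF tI] y(2)[OF t] by (auto simp: m_def)
    have "norm (phi n t) \<le> (1 / fact n) * K t ^ n" by (rule phi_bd[OF tI])
    also have "\<dots> \<le> (1 / fact n) * K e ^ n"
      using K_mono[OF tI de(2) te] K_nonneg[OF tI] by (intro mult_left_mono power_mono) auto
    finally have ph: "norm (phi n t) \<le> (1 / fact n) * K e ^ n" .
    have "norm ((-z)^(Suc n) * (of_real (r t) * phi n t)) = norm z ^ Suc n * (r t * norm (phi n t))"
      using rt by (simp add: norm_mult norm_power)
    also have "\<dots> \<le> norm z ^ Suc n * (m * ((1 / fact n) * K e ^ n))"
      using rt ph by (intro mult_left_mono mult_mono) auto
    also have "\<dots> = Mb n" by (simp add: Mb_def E_def power_mult_distrib field_simps)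
    finally show ?thesis .
  qed
  have sM: "summable Mb" unfolding Mb_def by (rule summable_mult[OF E_summable])
  have unif: "uniform_limit S (\<lambda>n t. \<Sum>i<n. (-z)^(Suc i) * (of_real (r t) * phi i t))
      (\<lambda>t. \<Sum>i. (-z)^(Suc i) * (of_real (r t) * phi i t)) sequentially"
    by (rule Weierstrass_m_test[OF bd sM])
  have "((\<lambda>t. \<Sum>n. (-z)^(Suc n) * psi n t) has_vector_derivative (\<Sum>i. (-z)^(Suc i) * (of_real (r x) * phi i x))) (at x within S)"
    by (rule VDS[OF _ dd unif xS]) (use Q_sums SI in \<open>auto simp: S_def sums_iff\<close>)
  then have D: "(Q z has_vector_derivative (\<Sum>i. (-z)^(Suc i) * (of_real (r x) * phi i x))) (at x)"
    using de by (simp add: S_def at_within_Icc_at Q_def[abs_def])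
  have "(\<lambda>n. (- (z * of_real (r x))) * ((-z)^n * phi n x)) sums ((- (z * of_real (r x))) * W z x)"
    by (rule sums_mult[OF W_sums[OF x]])
  then have "(\<lambda>n. (-z)^(Suc n) * (of_real (r x) * phi n x)) sums (- (z * of_real (r x) * W z x))"
    by (simp add: algebra_simps)
  then show ?thesis using D by (simp add: sums_iff)
qed

lemma W_lim: "(W z \<longlongrightarrow> 1) (at_left_end a)"
proof -
  have "((\<lambda>t. W z t - 1) \<longlongrightarrow> 0) (at_left_end a)"
  proof (rule Lim_null_comparison)
    obtain c where c: "c \<in> I" using einterval_nonempty[OF ab] by blast
    show "\<forall>\<^sub>F t in at_left_end a. norm (W z t - 1) \<le> exp (norm z * K t) - 1"
      using EV[OF c] by eventually_elim (rule W_m1, simp)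
    have "((\<lambda>t. exp (norm z * K t) - 1) \<longlongrightarrow> exp (norm z * 0) - 1) (at_left_end a)"
      by (intro tendsto_intros K_lim)
    then show "((\<lambda>t. exp (norm z * K t) - 1) \<longlongrightarrow> 0) (at_left_end a)" by simp
  qed
  then show ?thesis by (simp add: LIM_zero_iff)
qed

lemma Q_lim: "(Q z \<longlongrightarrow> 0) (at_left_end a)"
proof (rule Lim_null_comparison)
  obtain c where c: "c \<in> I" using einterval_nonempty[OF ab] by blast
  show "\<forall>\<^sub>F t in at_left_end a. norm (Q z t) \<le> norm z * R t * exp (norm z * K t)"
    using EV[OF c] by eventually_elim (rule Q_bd, simp)
  have "((\<lambda>t. norm z * R t * exp (norm z * K t)) \<longlongrightarrow> norm z * 0 * exp (norm z * 0)) (at_left_end a)"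
    by (intro tendsto_intros K_lim R_lim)
  then show "((\<lambda>t. norm z * R t * exp (norm z * K t)) \<longlongrightarrow> 0) (at_left_end a)" by simp
qed

lemma W_entire: assumes x: "x \<in> I" shows "entire_exp_type (\<lambda>z. W z x)"
proof -
  define c where "c n = phi n x * (-1)^n" for n
  have tm: "(-y)^n * phi n x = c n * y^n" for y n
    unfolding c_def power_minus[of y n] by (simp only: mult.assoc mult.commute mult.left_commute)
  have eq: "(\<lambda>z. W z x) = (\<lambda>z. \<Sum>n. c n * z^n)"
    by (rule ext) (simp only: W_def tm)
  have sm: "summable (\<lambda>n. c n * y^n)" for y
  proof -
    have "summable (\<lambda>n. (-y)^n * phi n x)" using W_sums[OF x] sums_summable by blast
    then show ?thesis by (simp only: tm)
  qed
  have "(\<lambda>z. \<Sum>n. c n * z^n) holomorphic_on UNIV"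
    unfolding holomorphic_on_def field_differentiable_def
  proof (intro ballI exI)
    fix z :: complex
    show "((\<lambda>z. \<Sum>n. c n * z^n) has_field_derivative (\<Sum>n. diffs c n * z^n)) (at z within UNIV)"
      using termdiffs_strong_converges_everywhere[OF sm] by simp
  qed
  then have H: "(\<lambda>z. W z x) holomorphic_on UNIV" by (subst eq)
  have "\<forall>z. norm (W z x) \<le> 1 * exp (K x * norm z)" using W_bd[OF x] by simp
  with H show ?thesis unfolding entire_exp_type_def by blast
qed

lemma main_sl2:
  "\<exists>W :: complex \<Rightarrow> real \<Rightarrow> complex.
     (\<forall>z. is_solution a b p r z (W z) \<and>
           (W z \<longlongrightarrow> 1) (at_left_end a) \<and>
           (qder p (W z) \<longlongrightarrow> 0) (at_left_end a)) \<and>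
     (\<forall>z v. is_solution a b p r z v \<and> (v \<longlongrightarrow> 1) (at_left_end a) \<and>
           (qder p v \<longlongrightarrow> 0) (at_left_end a) \<longrightarrow> (\<forall>x\<in>ivl a b. v x = W z x)) \<and>
     (\<forall>x\<in>ivl a b. entire_exp_type (\<lambda>z. W z x))"
proof (intro exI[of _ W] conjI allI impI ballI)
  fix z
  have qW: "qder p (W z) y = Q z y" if "y \<in> I" for y
    using vector_derivative_at[OF W_deriv[OF that]] ppos[OF that] by (simp add: qder_def)
  show "is_solution a b p r z (W z)"
    unfolding is_solution_def ivl_eq
  proof (intro ballI conjI)
    fix x assume x: "x \<in> I"
    show "W z differentiable at x" by (rule differentiableI_vector[OF W_deriv[OF x]])
    show "(qder p (W z) has_vector_derivative - (z * of_real (r x) * W z x)) (at x)"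
      by (rule has_vector_derivative_transform_within_open[OF Q_deriv[OF x] open_einterval x]) (simp add: qW)
  qed
  show "(W z \<longlongrightarrow> 1) (at_left_end a)" by (rule W_lim)
  obtain c where c: "c \<in> I" using einterval_nonempty[OF ab] by blast
  have "\<forall>\<^sub>F t in at_left_end a. Q z t = qder p (W z) t"
    using EV[OF c] by eventually_elim (simp add: qW)
  then show "(qder p (W z) \<longlongrightarrow> 0) (at_left_end a)" by (rule Lim_transform_eventually[OF Q_lim])
next
  fix x assume "x \<in> ivl a b"
  then show "entire_exp_type (\<lambda>z. W z x)" unfolding ivl_eq by (rule W_entire)
next
  fix z v x
  assume as: "is_solution a b p r z v \<and> (v \<longlongrightarrow> 1) (at_left_end a) \<and> (qder p v \<longlongrightarrow> 0) (at_left_end a)"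
    and x: "x \<in> ivl a b"
  have vs: "\<And>t. t \<in> I \<Longrightarrow> v differentiable at t"
    and vq: "\<And>t. t \<in> I \<Longrightarrow> (qder p v has_vector_derivative - (z * of_real (r t) * v t)) (at t)"
    using as unfolding is_solution_def ivl_eq by auto
  have qW: "qder p (W z) y = Q z y" if "y \<in> I" for y
    using vector_derivative_at[OF W_deriv[OF that]] ppos[OF that] by (simp add: qder_def)
  let ?u = "\<lambda>t. v t - W z t"
  have "?u x = 0"
  proof (rule U[where u' = "\<lambda>t. vector_derivative v (at t) - Q z t / of_real (p t)"
        and q = "\<lambda>t. qder p v t - Q z t" and z = z])
    show "((\<lambda>t. v t - W z t) has_vector_derivative vector_derivative v (at t) - Q z t / of_real (p t)) (at t)"
      if t: "t \<in> I" for t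
      using vs[OF t] W_deriv[OF t] by (intro has_vector_derivative_diff) (auto simp: vector_derivative_works)
    show "qder p v t - Q z t = of_real (p t) * (vector_derivative v (at t) - Q z t / of_real (p t))"
      if t: "t \<in> I" for t
      using ppos[OF t] by (simp add: qder_def algebra_simps)
    show "((\<lambda>t. qder p v t - Q z t) has_vector_derivative - (z * of_real (r t) * (v t - W z t))) (at t)"
      if t: "t \<in> I" for t
    proof -
      have "((\<lambda>t. qder p v t - Q z t) has_vector_derivative (- (z * of_real (r t) * v t)) - (- (z * of_real (r t) * W z t))) (at t)"
        by (rule has_vector_derivative_diff[OF vq[OF t] Q_deriv[OF t]])
      then show ?thesis by (simp add: algebra_simps)
    qed
    show "((\<lambda>t. v t - W z t) \<longlongrightarrow> 0) (at_left_end a)"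
      using tendsto_diff[OF conjunct1[OF conjunct2[OF as]] W_lim] by simp
    show "((\<lambda>t. qder p v t - Q z t) \<longlongrightarrow> 0) (at_left_end a)"
      using tendsto_diff[OF conjunct2[OF conjunct2[OF as]] Q_lim] by simp
    show "x \<in> I" using x by (simp add: ivl_eq)
  qed
  then show "v x = W z x" by simp
qed

end

theorem mainTheorem1:
  fixes a b :: ereal and p r :: "real \<Rightarrow> real"
  assumes ab: "a < b"
    and p_pos: "\<forall>x\<in>ivl a b. p x > 0"
    and r_pos: "\<forall>x\<in>ivl a b. r x > 0"
    and p_ac: "loc_abs_cont a b p"
    and r_ac: "loc_abs_cont a b r"
    and p'_ac: "\<exists>p'. (\<forall>x\<in>ivl a b. (p has_real_derivative p' x) (at x)) \<and> loc_abs_cont a b p'"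
    and r'_ac: "\<exists>r'. (\<forall>x\<in>ivl a b. (r has_real_derivative r' x) (at x)) \<and> loc_abs_cont a b r'"
    and int_cond: "\<exists>c\<in>ivl a b.
        (\<integral>\<^sup>+ y. ennreal (indicator {y. a < ereal y \<and> y < c} y *
            (integral {y..c} (\<lambda>x. 1 / p x) * r y)) \<partial>lborel) < \<infinity>"
  shows "\<exists>W :: complex \<Rightarrow> real \<Rightarrow> complex.
     (\<forall>z. is_solution a b p r z (W z) \<and>
           (W z \<longlongrightarrow> 1) (at_left_end a) \<and>
           (qder p (W z) \<longlongrightarrow> 0) (at_left_end a)) \<and>
     (\<forall>z v. is_solution a b p r z v \<and> (v \<longlongrightarrow> 1) (at_left_end a) \<and>
           (qder p v \<longlongrightarrow> 0) (at_left_end a) \<longrightarrow> (\<forall>x\<in>ivl a b. v x = W z x)) \<and>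
     (\<forall>x\<in>ivl a b. entire_exp_type (\<lambda>z. W z x))"
proof -
  obtain p' where p': "\<forall>x\<in>ivl a b. (p has_real_derivative p' x) (at x)" using p'_ac by blast
  obtain r' where r': "\<forall>x\<in>ivl a b. (r has_real_derivative r' x) (at x)" using r'_ac by blast
  interpret sl a b p r
  proof
    show "a < b" by (rule ab)
    show "\<And>x. x \<in> einterval a b \<Longrightarrow> 0 < p x" using p_pos by (simp add: ivl_eq)
    show "\<And>x. x \<in> einterval a b \<Longrightarrow> 0 < r x" using r_pos by (simp add: ivl_eq)
    show "\<And>x. x \<in> einterval a b \<Longrightarrow> isCont p x" using p' by (auto simp: ivl_eq intro: DERIV_isCont)
    show "\<And>x. x \<in> einterval a b \<Longrightarrow> isCont r x" using r' by (auto simp: ivl_eq intro: DERIV_isCont)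
  qed
  obtain c where c: "c \<in> einterval a b"
    and fin: "(\<integral>\<^sup>+ y. ennreal (indicator {y. a < ereal y \<and> y < c} y *
            (integral {y..c} (\<lambda>x. 1 / p x) * r y)) \<partial>lborel) < \<infinity>"
    using int_cond by (auto simp: ivl_eq)
  note DD = Dpart[OF c fin]
  interpret sl2 a b p r
    by unfold_locales (use DD in auto)
  show ?thesis by (rule main_sl2)
qed

end
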